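(* Let $X,Y$ be random variables with $P(X=k)=p_k\ge0$ and $P(Y=k)=q_k\ge0$ for $k=0,1,2,\dots$, with $q_k>0$ so that the ratios $p_k/q_k$ are defined. Let $L_X(x)=\sum_{k=0}^\infty p_ke^{-kx}$ and $L_Y(x)=\sum_{k=0}^\infty q_ke^{-kx}$ $(x>0)$. If one of the conditions (i) the sequence $\{p_k/q_k\}$ is increasing (resp. decreasing) for all $k\ge0$; (ii) there exists an integer $m\ge1$ such that $\{p_k/q_k\}$ is increasing (resp. decreasing) for $0\le k\le m$ and decreasing (resp. increasing) for $k\ge m$, and $H_{L_X,L_Y}(0^+)\ge0$ (resp. $\le0$); holds, then $Y\le_{Lt-r}X$ (resp. $X\le_{Lt-r}Y$).
   Context: For a random variable $Z\ge0$ with distribution function $F_Z$, its Laplace–Stieltjes transform is $L_Z(x)=\int_0^\infty e^{-tx}\,dF_Z(t)$, $x>0$. For random variables $X,Y\ge0$, $X\le_{Lt-r}Y$ (Laplace transform ratio order) means that $x\mapsto L_Y(x)/L_X(x)$ is decreasing on $(0,\infty)$. $H_{F,G}=\frac{F'}{G'}G-F$ and $H_{F,G}(0^+)=\lim_{x\to0^+}H_{F,G}(x)$. *)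

theory Defs
  imports "HOL-Analysis.Analysis"
begin

definition LST :: "(nat \<Rightarrow> real) \<Rightarrow> real \<Rightarrow> real" where
  "LST p x = (\<Sum>k. p k * exp (- real k * x))"

definition H_fun :: "(real \<Rightarrow> real) \<Rightarrow> (real \<Rightarrow> real) \<Rightarrow> real \<Rightarrow> real" where
  "H_fun F G x = deriv F x / deriv G x * G x - F x"

text \<open>Laplace transform ratio order: X <=_{Lt-r} Y iff L_Y/L_X is decreasing on (0,oo).
  Here X has pmf p and Y has pmf q.\<close>
definition lt_r_le :: "(nat \<Rightarrow> real) \<Rightarrow> (nat \<Rightarrow> real) \<Rightarrow> bool" where
  "lt_r_le p q \<longleftrightarrow> (\<forall>x y. 0 < x \<longrightarrow> x \<le> y \<longrightarrow> LST q y / LST p y \<le> LST q x / LST p x)"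

end

theory Submission
  imports Defs
begin


definition cv :: "(nat \<Rightarrow> real) \<Rightarrow> bool" where
  "cv a \<longleftrightarrow> (\<forall>s::real. \<bar>s\<bar> < 1 \<longrightarrow> summable (\<lambda>n. a n * s^n))"

definition ps :: "(nat \<Rightarrow> real) \<Rightarrow> real \<Rightarrow> real" where
  "ps a s = (\<Sum>n. a n * s^n)"

lemma cv_diffs: "cv a \<Longrightarrow> cv (diffs a)"
  unfolding cv_def by (auto intro: termdiff_converges[where K=1])

lemma cv_uminus: "cv a \<Longrightarrow> cv (\<lambda>n. - a n)"
  unfolding cv_def by (auto dest: summable_minus)

lemma ps_uminus: "cv a \<Longrightarrow> \<bar>s\<bar> < 1 \<Longrightarrow> ps (\<lambda>n. - a n) s = - ps a s"
  unfolding ps_def cv_def by (simp add: suminf_minus)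

lemma ps_deriv: "cv a \<Longrightarrow> \<bar>s\<bar> < 1 \<Longrightarrow> (ps a has_real_derivative ps (diffs a) s) (at s)"
  unfolding ps_def cv_def
  using termdiffs_strong'[of 1 a s] by (auto simp: fun_eq_iff)

lemma ps_pos:
  assumes "\<And>k. b k > 0" "cv b" "0 \<le> s" "s < 1"
  shows "ps b s > 0"
proof -
  have "summable (\<lambda>n. b n * s^n)" using assms unfolding cv_def by auto
  moreover have "\<And>n. 0 \<le> b n * s^n" using assms by (simp add: less_imp_le)
  moreover have "0 < b 0 * s^0" using assms by simp
  ultimately show ?thesis unfolding ps_def by (rule suminf_pos2)
qed

lemma diffs_pos: fixes b :: "nat \<Rightarrow> real" assumes "\<And>k. b k > 0" shows "diffs b k > 0"
  unfolding diffs_def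
proof (rule mult_pos_pos)
  show "0 < (of_nat (Suc k) :: real)" by (simp only: of_nat_0_less_iff zero_less_Suc)
  show "0 < b (Suc k)" by (rule assms)
qed

lemma diffs_ratio: "diffs a k / diffs b k = a (Suc k) / (b (Suc k) :: real)"
proof -
  have "of_nat (Suc k) \<noteq> (0::real)" by (simp only: of_nat_eq_0_iff nat.distinct(1) not_False_eq_True)
  thus ?thesis unfolding diffs_def by (rule mult_divide_mult_cancel_left)
qed

lemma ps_zero: "ps a 0 = a 0"
  unfolding ps_def by simp

lemma trick:
  assumes bpos: "\<And>k. b k > 0" and ca: "cv a" and cb: "cv b"
    and mono: "\<And>i j. i \<le> j \<Longrightarrow> a i / b i \<le> a j / b j"
    and xy: "0 \<le> x" "x \<le> y" "y < 1"
  shows "ps a x / ps b x \<le> ps a y / ps b y"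
proof -
  define c where "c = ps a x / ps b x"
  have bx: "ps b x > 0" and byy: "ps b y > 0" using ps_pos[OF bpos cb] xy by auto
  have sa: "\<And>s. 0 \<le> s \<Longrightarrow> s < 1 \<Longrightarrow> summable (\<lambda>n. a n * s^n)" using ca unfolding cv_def by auto
  have sb: "\<And>s. 0 \<le> s \<Longrightarrow> s < 1 \<Longrightarrow> summable (\<lambda>n. b n * s^n)" using cb unfolding cv_def by auto
  define u where "u = (\<lambda>n. a n - c * b n)"
  have su: "\<And>s. 0 \<le> s \<Longrightarrow> s < 1 \<Longrightarrow> summable (\<lambda>n. u n * s^n)"
  proof -
    fix s :: real assume s: "0 \<le> s" "s < 1"
    have "summable (\<lambda>n. a n * s^n - c * (b n * s^n))"
      by (intro summable_diff summable_mult sa sb s)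
    moreover have "(\<lambda>n. u n * s^n) = (\<lambda>n. a n * s^n - c * (b n * s^n))"
      unfolding u_def by (rule ext) (simp add: left_diff_distrib)
    ultimately show "summable (\<lambda>n. u n * s^n)" by simp
  qed
  have psu: "\<And>s. 0 \<le> s \<Longrightarrow> s < 1 \<Longrightarrow> (\<Sum>n. u n * s^n) = ps a s - c * ps b s"
  proof -
    fix s :: real assume "0 \<le> s" "s < 1"
    hence 1: "summable (\<lambda>n. a n * s^n)" "summable (\<lambda>n. c * (b n * s^n))" using sa sb summable_mult by auto
    have "(\<Sum>n. u n * s^n) = (\<Sum>n. a n * s^n - c * (b n * s^n))" unfolding u_def by (simp add: left_diff_distrib mult.assoc)
    also have "\<dots> = (\<Sum>n. a n * s^n) - (\<Sum>n. c * (b n * s^n))" using 1 by (rule suminf_diff[symmetric])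
    also have "\<dots> = ps a s - c * ps b s" unfolding ps_def using sb[OF \<open>0 \<le> s\<close> \<open>s < 1\<close>] by (simp add: suminf_mult)
    finally show "(\<Sum>n. u n * s^n) = ps a s - c * ps b s" .
  qed
  have sign: "\<And>n. (u n \<ge> 0) = (a n / b n \<ge> c)"
    unfolding u_def using bpos by (simp add: pos_le_divide_eq)
  have ux: "(\<Sum>n. u n * x^n) = 0" using psu[of x] xy bx by (simp add: c_def)
  have goal: "(\<Sum>n. u n * y^n) \<ge> 0"
  proof (cases "x = 0")
    case True
    have "\<And>n. u n \<ge> 0" unfolding sign c_def True ps_zero using mono[of 0] by simp
    then show ?thesis using xy by (intro suminf_nonneg su) auto
  next
    case False
    hence xpos: "x > 0" using xy by auto
    show ?thesis
    proof (cases "\<exists>k. u k \<ge> 0")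
      case False
      hence "0 < (\<Sum>n. - (u n * x^n))"
        using xpos xy False by (intro suminf_pos summable_minus su) (auto intro!: mult_neg_pos simp: not_le)
      then show ?thesis using ux suminf_minus[OF su[of x]] xy xpos by simp
    next
      case True
      define N where "N = (LEAST k. u k \<ge> 0)"
      have thr: "\<And>k. (u k \<ge> 0) = (N \<le> k)"
      proof -
        fix k
        have uN: "u N \<ge> 0" unfolding N_def by (rule LeastI_ex[OF True])
        show "(u k \<ge> 0) = (N \<le> k)"
        proof
          assume "u k \<ge> 0" thus "N \<le> k" unfolding N_def by (rule Least_le)
        next
          assume "N \<le> k" thus "u k \<ge> 0" using uN mono[of N k] unfolding sign by linarith
        qed
      qed
      have trm: "u n * x^n * y^N \<le> u n * y^n * x^N" for n
      proof (cases "N \<le> n")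
        case True
        then obtain d where n: "n = N + d" using le_Suc_ex by blast
        have "x^N * x^d * y^N \<le> x^N * y^d * y^N" using xy
          by (intro mult_right_mono mult_left_mono power_mono) auto
        moreover have "x^n = x^N * x^d" "y^n = y^N * y^d" by (simp_all add: n power_add)
        ultimately have "x^n * y^N \<le> y^n * x^N" by (simp add: mult_ac)
        moreover have "u n \<ge> 0" using thr True by auto
        ultimately have "u n * (x^n * y^N) \<le> u n * (y^n * x^N)" by (rule mult_left_mono)
        thus ?thesis by (simp add: mult.assoc)
      next
        case False
        hence "n \<le> N" by simp
        then obtain d where n: "N = n + d" using le_Suc_ex by blast
        have "x^n * x^d * y^n \<le> x^n * y^d * y^n" using xy
          by (intro mult_right_mono mult_left_mono power_mono) auto
        moreover have "x^N = x^n * x^d" "y^N = y^n * y^d" by (simp_all add: n power_add)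
        ultimately have "y^n * x^N \<le> x^n * y^N" by (simp add: mult_ac)
        moreover have "u n \<le> 0" using thr False by (meson not_le less_imp_le)
        ultimately have "u n * (x^n * y^N) \<le> u n * (y^n * x^N)" by (rule mult_left_mono_neg)
        thus ?thesis by (simp add: mult.assoc)
      qed
      have sx: "summable (\<lambda>n. u n * x^n)" by (rule su) (use xy in simp_all)
      have sy: "summable (\<lambda>n. u n * y^n)" by (rule su) (use xy in simp_all)
      have "(\<Sum>n. u n * x^n * y^N) \<le> (\<Sum>n. u n * y^n * x^N)"
        by (rule suminf_le[OF trm summable_mult2[OF sx] summable_mult2[OF sy]])
      moreover have "(\<Sum>n. u n * x^n) * y^N = (\<Sum>n. u n * x^n * y^N)" by (rule suminf_mult2[OF sx])
      moreover have "(\<Sum>n. u n * y^n) * x^N = (\<Sum>n. u n * y^n * x^N)" by (rule suminf_mult2[OF sy])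
      ultimately have "(\<Sum>n. u n * x^n) * y^N \<le> (\<Sum>n. u n * y^n) * x^N" by simp
      hence "0 \<le> (\<Sum>n. u n * y^n) * x^N" using ux by simp
      moreover have "0 < x^N" using xpos by simp
      ultimately show ?thesis by (simp add: zero_le_mult_iff)
    qed
  qed
  hence "c * ps b y \<le> ps a y" using psu[of y] xy by simp
  thus ?thesis using byy unfolding c_def by (simp add: pos_le_divide_eq)
qed

definition unimod :: "(real \<Rightarrow> real) \<Rightarrow> real \<Rightarrow> bool" where
  "unimod E t \<longleftrightarrow> (\<forall>x y. 0 \<le> x \<longrightarrow> x \<le> y \<longrightarrow> y \<le> t \<longrightarrow> y < 1 \<longrightarrow> E x \<le> E y)
     \<and> (\<forall>x y. t \<le> x \<longrightarrow> x \<le> y \<longrightarrow> y < 1 \<longrightarrow> E y \<le> E x)"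

lemma mono_deriv:
  fixes f f' :: "real \<Rightarrow> real"
  assumes "x \<le> y" "\<And>z. x \<le> z \<Longrightarrow> z \<le> y \<Longrightarrow> (f has_real_derivative f' z) (at z)"
    "\<And>z. x < z \<Longrightarrow> z < y \<Longrightarrow> f' z \<ge> 0"
  shows "f x \<le> f y"
proof (cases "x = y")
  case False
  hence "x < y" using assms by auto
  from MVT2[OF this assms(2)] obtain z where "x < z" "z < y" "f y - f x = (y - x) * f' z" by blast
  moreover have "f' z \<ge> 0" using assms(3) calculation by auto
  moreover have "(y - x) * f' z \<ge> 0" using \<open>x < y\<close> calculation by simp
  ultimately show ?thesis by linarith
qed simp

definition hh :: "(nat \<Rightarrow> real) \<Rightarrow> (nat \<Rightarrow> real) \<Rightarrow> real \<Rightarrow> real" where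
  "hh a b s = ps (diffs a) s / ps (diffs b) s * ps b s - ps a s"

lemma alg_id2:
  fixes A' B' c :: real
  assumes "B' > 0"
  shows "B' * (A' / B' - c) = A' - c * B'"
  using assms by (simp add: right_diff_distrib)

lemma phi_deriv:
  assumes bpos: "\<And>k. b k > 0" and ca: "cv a" and cb: "cv b" and z: "0 \<le> z" "z < 1"
  shows "((\<lambda>s. ps a s - c * ps b s) has_real_derivative
           ps (diffs b) z * (ps (diffs a) z / ps (diffs b) z - c)) (at z)"
proof -
  have "ps (diffs b) z > 0" using ps_pos[OF diffs_pos[OF bpos] cv_diffs[OF cb]] z by auto
  moreover have "((\<lambda>s. ps a s - c * ps b s) has_real_derivative ps (diffs a) z - c * ps (diffs b) z) (at z)"
  proof -
    have d1: "(ps a has_real_derivative ps (diffs a) z) (at z)" by (rule ps_deriv[OF ca]) (use z in simp)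
    have d2: "(ps b has_real_derivative ps (diffs b) z) (at z)" by (rule ps_deriv[OF cb]) (use z in simp)
    show ?thesis by (rule DERIV_diff[OF d1 DERIV_cmult[OF d2]])
  qed
  ultimately show ?thesis using alg_id2 by metis
qed

lemma alg_id:
  fixes A A' B B' :: real
  assumes "B' > 0" "B > 0"
  shows "(A' * B - A * B') / (B * B) = B' * (A' / B' * B - A) / B^2"
proof -
  have "B' * (A' / B' * B - A) = A' * B - A * B'" using assms by (simp add: algebra_simps)
  thus ?thesis by (simp add: power2_eq_square)
qed

lemma E_deriv:
  assumes bpos: "\<And>k. b k > 0" and ca: "cv a" and cb: "cv b" and z: "0 \<le> z" "z < 1"
  shows "((\<lambda>s. ps a s / ps b s) has_real_derivative
           ps (diffs b) z * hh a b z / (ps b z)^2) (at z)"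
proof -
  have bz: "ps b z > 0" using ps_pos[OF bpos cb] z by auto
  have b'z: "ps (diffs b) z > 0" using ps_pos[OF diffs_pos[OF bpos] cv_diffs[OF cb]] z by auto
  have "((\<lambda>s. ps a s / ps b s) has_real_derivative
           (ps (diffs a) z * ps b z - ps a z * ps (diffs b) z) / (ps b z * ps b z)) (at z)"
  proof -
    have d1: "(ps a has_real_derivative ps (diffs a) z) (at z)" by (rule ps_deriv[OF ca]) (use z in simp)
    have d2: "(ps b has_real_derivative ps (diffs b) z) (at z)" by (rule ps_deriv[OF cb]) (use z in simp)
    have "ps b z \<noteq> 0" using bz by simp
    from DERIV_divide[OF d1 d2 this] show ?thesis .
  qed
  moreover have "(ps (diffs a) z * ps b z - ps a z * ps (diffs b) z) / (ps b z * ps b z)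
      = ps (diffs b) z * hh a b z / (ps b z)^2"
    unfolding hh_def using alg_id[OF b'z bz] .
  ultimately show ?thesis by simp
qed



lemma h_mono:
  fixes a b :: "nat \<Rightarrow> real"
  assumes bpos: "\<And>k. b k > 0" and ca: "cv a" and cb: "cv b"
    and ut: "unimod (\<lambda>s. ps (diffs a) s / ps (diffs b) s) t" and t0: "0 \<le> t"
  shows "\<And>x y. 0 \<le> x \<Longrightarrow> x \<le> y \<Longrightarrow> y \<le> t \<Longrightarrow> y < 1 \<Longrightarrow> hh a b x \<le> hh a b y"
    and "\<And>x y. t \<le> x \<Longrightarrow> x \<le> y \<Longrightarrow> y < 1 \<Longrightarrow> hh a b y \<le> hh a b x"
proof -
  define D where "D = (\<lambda>s. ps (diffs a) s / ps (diffs b) s)"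
  have hD: "hh a b s = D s * ps b s - ps a s" for s unfolding hh_def D_def by simp
  have bp: "0 \<le> s \<Longrightarrow> s < 1 \<Longrightarrow> ps b s > 0" for s using ps_pos[OF bpos cb] by auto
  have b'p: "0 \<le> s \<Longrightarrow> s < 1 \<Longrightarrow> ps (diffs b) s > 0" for s
    using ps_pos[OF diffs_pos[OF bpos] cv_diffs[OF cb]] by auto
  have phi: "0 \<le> z \<Longrightarrow> z < 1 \<Longrightarrow> ((\<lambda>s. ps a s - c * ps b s) has_real_derivative
           ps (diffs b) z * (D z - c)) (at z)" for z c
    using phi_deriv[OF bpos ca cb] unfolding D_def by blast
  {
    fix x y assume xy: "0 \<le> x" "x \<le> y" "y \<le> t" "y < 1"
    have "(\<lambda>s. - (ps a s - D y * ps b s)) x \<le> (\<lambda>s. - (ps a s - D y * ps b s)) y"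
    proof (rule mono_deriv[OF xy(2)])
      fix z assume "x \<le> z" "z \<le> y"
      thus "((\<lambda>s. - (ps a s - D y * ps b s)) has_real_derivative - (ps (diffs b) z * (D z - D y))) (at z)"
      proof -
        have "0 \<le> z" "z < 1" using \<open>x \<le> z\<close> \<open>z \<le> y\<close> xy by auto
        from DERIV_minus[OF phi[OF this]] show ?thesis .
      qed
    next
      fix z assume "x < z" "z < y"
      hence "D z \<le> D y" using ut xy unfolding unimod_def D_def by auto
      moreover have "ps (diffs b) z > 0" using b'p \<open>x < z\<close> \<open>z < y\<close> xy by auto
      ultimately show "0 \<le> - (ps (diffs b) z * (D z - D y))" by (simp add: mult_nonneg_nonpos)
    qed
    hence 1: "ps a y - D y * ps b y \<le> ps a x - D y * ps b x" by simp
    have "D x \<le> D y" using ut xy unfolding unimod_def D_def by auto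
    hence "D x * ps b x \<le> D y * ps b x" using bp[of x] xy by (intro mult_right_mono) force+
    with 1 show "hh a b x \<le> hh a b y" unfolding hD by linarith
  }
  {
    fix x y assume xy: "t \<le> x" "x \<le> y" "y < 1"
    have "(\<lambda>s. (ps a s - D y * ps b s)) x \<le> (\<lambda>s. (ps a s - D y * ps b s)) y"
    proof (rule mono_deriv[OF xy(2)])
      fix z assume "x \<le> z" "z \<le> y"
      thus "((\<lambda>s. (ps a s - D y * ps b s)) has_real_derivative (ps (diffs b) z * (D z - D y))) (at z)"
        using phi[of z "D y"] xy t0 by auto
    next
      fix z assume "x < z" "z < y"
      hence "D y \<le> D z" using ut xy unfolding unimod_def D_def by auto
      moreover have "ps (diffs b) z > 0" using b'p \<open>x < z\<close> \<open>z < y\<close> xy t0 by auto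
      ultimately show "0 \<le> (ps (diffs b) z * (D z - D y))" by simp
    qed
    hence 1: "ps a x - D y * ps b x \<le> ps a y - D y * ps b y" by simp
    have "D y \<le> D x" using ut xy unfolding unimod_def D_def by auto
    hence "D y * ps b x \<le> D x * ps b x" using bp[of x] xy t0 by (intro mult_right_mono) force+
    with 1 show "hh a b y \<le> hh a b x" unfolding hD by linarith
  }
qed

lemma hh_zero:
  fixes a b :: "nat \<Rightarrow> real"
  assumes bpos: "\<And>k. b k > 0" and r: "a 0 / b 0 \<le> a 1 / b 1"
  shows "hh a b 0 \<ge> 0"
proof -
  have "hh a b 0 = a 1 / b 1 * b 0 - a 0" unfolding hh_def ps_zero diffs_def by simp
  moreover have "a 0 \<le> a 1 / b 1 * b 0" using r bpos[of 0] by (simp add: pos_divide_le_eq)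
  ultimately show ?thesis by simp
qed

lemma E_mono_from_h:
  fixes a b :: "nat \<Rightarrow> real"
  assumes bpos: "\<And>k. b k > 0" and ca: "cv a" and cb: "cv b"
    and xy: "0 \<le> x" "x \<le> y" "y < 1" and h: "\<And>z. x < z \<Longrightarrow> z < y \<Longrightarrow> hh a b z \<ge> 0"
  shows "ps a x / ps b x \<le> ps a y / ps b y"
proof (rule mono_deriv[OF xy(2)])
  fix z assume "x \<le> z" "z \<le> y"
  thus "((\<lambda>s. ps a s / ps b s) has_real_derivative ps (diffs b) z * hh a b z / (ps b z)^2) (at z)"
    using E_deriv[OF bpos ca cb] xy by auto
next
  fix z assume "x < z" "z < y"
  moreover have "ps (diffs b) z > 0" using ps_pos[OF diffs_pos[OF bpos] cv_diffs[OF cb]] calculation xy by auto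
  ultimately show "0 \<le> ps (diffs b) z * hh a b z / (ps b z)^2" using h by simp
qed

lemma E_antimono_from_h:
  fixes a b :: "nat \<Rightarrow> real"
  assumes bpos: "\<And>k. b k > 0" and ca: "cv a" and cb: "cv b"
    and xy: "0 \<le> x" "x \<le> y" "y < 1" and h: "\<And>z. x < z \<Longrightarrow> z < y \<Longrightarrow> hh a b z \<le> 0"
  shows "ps a y / ps b y \<le> ps a x / ps b x"
proof -
  have "(\<lambda>s. - (ps a s / ps b s)) x \<le> (\<lambda>s. - (ps a s / ps b s)) y"
  proof (rule mono_deriv[OF xy(2)])
    fix z assume "x \<le> z" "z \<le> y"
    thus "((\<lambda>s. - (ps a s / ps b s)) has_real_derivative - (ps (diffs b) z * hh a b z / (ps b z)^2)) (at z)"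
    proof -
      have "0 \<le> z" "z < 1" using \<open>x \<le> z\<close> \<open>z \<le> y\<close> xy by auto
      from DERIV_minus[OF E_deriv[OF bpos ca cb this]] show ?thesis .
    qed
  next
    fix z assume "x < z" "z < y"
    moreover have "ps (diffs b) z > 0" using ps_pos[OF diffs_pos[OF bpos] cv_diffs[OF cb]] calculation xy by auto
    ultimately show "0 \<le> - (ps (diffs b) z * hh a b z / (ps b z)^2)" using h
      by (simp add: divide_nonpos_nonneg mult_nonneg_nonpos)
  qed
  thus ?thesis by simp
qed



lemma Q:
  "\<forall>a b. (\<forall>k. b k > 0) \<longrightarrow> cv a \<longrightarrow> cv b
     \<longrightarrow> (\<forall>i j. i \<le> j \<longrightarrow> j \<le> m \<longrightarrow> a i / b i \<le> a j / b j)
     \<longrightarrow> (\<forall>i j. m \<le> i \<longrightarrow> i \<le> j \<longrightarrow> a j / b j \<le> a i / b i)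
     \<longrightarrow> (\<exists>t. 0 \<le> t \<and> t \<le> 1 \<and> unimod (\<lambda>s. ps a s / ps b s) t)"
proof (induction m)
  case 0
  show ?case
  proof (intro allI impI)
    fix a b :: "nat \<Rightarrow> real"
    assume bpos: "\<forall>k. b k > 0" and ca: "cv a" and cb: "cv b"
      and dec: "\<forall>i j. 0 \<le> i \<longrightarrow> i \<le> j \<longrightarrow> a j / b j \<le> a i / b i"
    have "unimod (\<lambda>s. ps a s / ps b s) 0"
      unfolding unimod_def
    proof (intro conjI allI impI)
      fix x y :: real assume "0 \<le> x" "x \<le> y" "y \<le> 0"
      hence "x = y" by simp
      thus "ps a x / ps b x \<le> ps a y / ps b y" by simp
    next
      fix x y :: real assume xy: "0 \<le> x" "x \<le> y" "y < 1"
      have "ps (\<lambda>n. - a n) x / ps b x \<le> ps (\<lambda>n. - a n) y / ps b y"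
      proof (rule trick)
        show "\<And>k. b k > 0" using bpos by auto
        show "cv (\<lambda>n. - a n)" using cv_uminus[OF ca] .
        show "cv b" by fact
        fix i j :: nat assume "i \<le> j"
        hence "a j / b j \<le> a i / b i" using dec by blast
        thus "- a i / b i \<le> - a j / b j" unfolding minus_divide_left[symmetric] by linarith
      qed (use xy in auto)
      moreover have "ps (\<lambda>n. - a n) x = - ps a x" by (rule ps_uminus[OF ca]) (use xy in simp)
      moreover have "ps (\<lambda>n. - a n) y = - ps a y" by (rule ps_uminus[OF ca]) (use xy in simp)
      ultimately have "- ps a x / ps b x \<le> - ps a y / ps b y" by simp
      thus "ps a y / ps b y \<le> ps a x / ps b x" by (simp only: minus_divide_left[symmetric] neg_le_iff_le)
    qed
    thus "\<exists>t. 0 \<le> t \<and> t \<le> 1 \<and> unimod (\<lambda>s. ps a s / ps b s) t" by (intro exI[of _ 0]) auto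
  qed
next
  case (Suc m)
  show ?case
  proof (intro allI impI)
    fix a b :: "nat \<Rightarrow> real"
    assume bpos': "\<forall>k. b k > 0" and ca: "cv a" and cb: "cv b"
      and inc: "\<forall>i j. i \<le> j \<longrightarrow> j \<le> Suc m \<longrightarrow> a i / b i \<le> a j / b j"
      and dec: "\<forall>i j. Suc m \<le> i \<longrightarrow> i \<le> j \<longrightarrow> a j / b j \<le> a i / b i"
    have bpos: "\<And>k. b k > 0" using bpos' by auto
    have i1: "\<And>k. diffs b k > 0" using diffs_pos[of b] bpos by blast
    have i2: "diffs a i / diffs b i \<le> diffs a j / diffs b j" if "i \<le> j" "j \<le> m" for i j
    proof -
      have "Suc i \<le> Suc j" "Suc j \<le> Suc m" using that by auto
      hence "a (Suc i) / b (Suc i) \<le> a (Suc j) / b (Suc j)" using inc by blast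
      thus ?thesis unfolding diffs_ratio .
    qed
    have i3: "diffs a j / diffs b j \<le> diffs a i / diffs b i" if "m \<le> i" "i \<le> j" for i j
    proof -
      have "Suc m \<le> Suc i" "Suc i \<le> Suc j" using that by auto
      hence "a (Suc j) / b (Suc j) \<le> a (Suc i) / b (Suc i)" using dec by blast
      thus ?thesis unfolding diffs_ratio .
    qed
    have "\<exists>t. 0 \<le> t \<and> t \<le> 1 \<and> unimod (\<lambda>s. ps (diffs a) s / ps (diffs b) s) t"
      using Suc.IH[rule_format, OF i1 cv_diffs[OF ca] cv_diffs[OF cb] i2 i3] by blast
    then obtain t where t: "0 \<le> t" "t \<le> 1" and ut: "unimod (\<lambda>s. ps (diffs a) s / ps (diffs b) s) t" by blast
    note hm1 = h_mono(1)[OF bpos ca cb ut t(1)]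
    note hm2 = h_mono(2)[OF bpos ca cb ut t(1)]
    let ?h = "hh a b"
    have "(0::nat) \<le> 1" "(1::nat) \<le> Suc m" by auto
    hence "a 0 / b 0 \<le> a 1 / b 1" using inc by blast
    hence h0: "?h 0 \<ge> 0" using hh_zero[of b a] bpos by blast
    have hpos1: "?h s \<ge> 0" if "0 \<le> s" "s \<le> t" "s < 1" for s
    proof -
      have "?h 0 \<le> ?h s" using hm1[of 0 s] that by simp
      thus ?thesis using h0 by linarith
    qed
    define S where "S = insert t {s. t \<le> s \<and> s < 1 \<and> ?h s \<ge> 0}"
    define t2 where "t2 = Sup S"
    have bdd: "bdd_above S" unfolding S_def bdd_above_def using t by (intro exI[of _ 1]) auto
    have tt2: "t \<le> t2" unfolding t2_def by (rule cSup_upper[OF _ bdd]) (simp add: S_def)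
    have t21: "t2 \<le> 1" unfolding t2_def using t by (intro cSup_least) (auto simp: S_def)
    have pos2: "\<And>s. 0 \<le> s \<Longrightarrow> s < t2 \<Longrightarrow> s < 1 \<Longrightarrow> ?h s \<ge> 0"
    proof -
      fix s assume s: "0 \<le> s" "s < t2" "s < 1"
      show "?h s \<ge> 0"
      proof (cases "s \<le> t")
        case True thus ?thesis using hpos1 s by auto
      next
        case False
        have "\<exists>s'\<in>S. s < s'" using s(2) unfolding t2_def
          by (subst (asm) less_cSup_iff[OF _ bdd]) (auto simp: S_def)
        then obtain s' where "s' \<in> S" "s < s'" by blast
        hence "t \<le> s'" "s' < 1" "?h s' \<ge> 0" using False unfolding S_def by auto
        moreover have "?h s' \<le> ?h s" using hm2[of s s'] False \<open>s < s'\<close> calculation by auto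
        ultimately show ?thesis by linarith
      qed
    qed
    have neg2: "\<And>s. t2 < s \<Longrightarrow> s < 1 \<Longrightarrow> ?h s < 0"
    proof (rule ccontr)
      fix s assume s: "t2 < s" "s < 1" "\<not> ?h s < 0"
      hence "s \<in> S" using tt2 unfolding S_def by auto
      hence "s \<le> t2" unfolding t2_def by (rule cSup_upper[OF _ bdd])
      thus False using s by simp
    qed
    have "unimod (\<lambda>s. ps a s / ps b s) t2"
      unfolding unimod_def
    proof (intro conjI allI impI)
      fix x y :: real assume xy: "0 \<le> x" "x \<le> y" "y \<le> t2" "y < 1"
      show "ps a x / ps b x \<le> ps a y / ps b y"
      proof (rule E_mono_from_h[OF bpos ca cb xy(1,2,4)])
        fix z assume "x < z" "z < y"
        thus "0 \<le> ?h z" using pos2[of z] xy by simp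
      qed
    next
      fix x y :: real assume xy: "t2 \<le> x" "x \<le> y" "y < 1"
      show "ps a y / ps b y \<le> ps a x / ps b x"
      proof (rule E_antimono_from_h[OF bpos ca cb _ xy(2,3)])
        show "0 \<le> x" using xy tt2 t by simp
        fix z assume "x < z" "z < y"
        thus "?h z \<le> 0" using neg2[of z] xy by simp
      qed
    qed
    thus "\<exists>t. 0 \<le> t \<and> t \<le> 1 \<and> unimod (\<lambda>s. ps a s / ps b s) t"
      using tt2 t21 t by (intro exI[of _ t2]) auto
  qed
qed



lemma core:
  fixes a b :: "nat \<Rightarrow> real"
  assumes bpos: "\<And>k. b k > 0" and ca: "cv a" and cb: "cv b"
    and cond: "(\<forall>i j. i \<le> j \<longrightarrow> a i / b i \<le> a j / b j)
          \<or> (\<exists>m::nat. m \<ge> 1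
               \<and> (\<forall>i j. i \<le> j \<and> j \<le> m \<longrightarrow> a i / b i \<le> a j / b j)
               \<and> (\<forall>i j. m \<le> i \<and> i \<le> j \<longrightarrow> a j / b j \<le> a i / b i)
               \<and> (\<exists>c::ereal. ((\<lambda>x. ereal (hh a b (exp (- x)))) \<longlongrightarrow> c) (at_right 0) \<and> c \<ge> 0))"
    and uv: "0 \<le> u" "u \<le> v" "v < 1"
  shows "ps a u / ps b u \<le> ps a v / ps b v"
  using cond
proof
  assume "\<forall>i j. i \<le> j \<longrightarrow> a i / b i \<le> a j / b j"
  thus ?thesis using trick[OF bpos ca cb _ uv] by blast
next
  assume "\<exists>m::nat. m \<ge> 1
               \<and> (\<forall>i j. i \<le> j \<and> j \<le> m \<longrightarrow> a i / b i \<le> a j / b j)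
               \<and> (\<forall>i j. m \<le> i \<and> i \<le> j \<longrightarrow> a j / b j \<le> a i / b i)
               \<and> (\<exists>c::ereal. ((\<lambda>x. ereal (hh a b (exp (- x)))) \<longlongrightarrow> c) (at_right 0) \<and> c \<ge> 0)"
  then obtain m c where m1: "m \<ge> 1"
    and inc: "\<forall>i j. i \<le> j \<and> j \<le> m \<longrightarrow> a i / b i \<le> a j / b j"
    and dec: "\<forall>i j. m \<le> i \<and> i \<le> j \<longrightarrow> a j / b j \<le> a i / b i"
    and lim: "((\<lambda>x. ereal (hh a b (exp (- x)))) \<longlongrightarrow> c) (at_right 0)" and c0: "c \<ge> 0"
    by blast
  have i1: "\<And>k. diffs b k > 0" using diffs_pos[of b] bpos by blast
  have i2: "diffs a i / diffs b i \<le> diffs a j / diffs b j" if "i \<le> j" "j \<le> m - 1" for i j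
  proof -
    have "Suc i \<le> Suc j \<and> Suc j \<le> m" using that m1 by auto
    hence "a (Suc i) / b (Suc i) \<le> a (Suc j) / b (Suc j)" using inc by blast
    thus ?thesis unfolding diffs_ratio .
  qed
  have i3: "diffs a j / diffs b j \<le> diffs a i / diffs b i" if "m - 1 \<le> i" "i \<le> j" for i j
  proof -
    have "m \<le> Suc i \<and> Suc i \<le> Suc j" using that m1 by auto
    hence "a (Suc j) / b (Suc j) \<le> a (Suc i) / b (Suc i)" using dec by blast
    thus ?thesis unfolding diffs_ratio .
  qed
  have "\<exists>t. 0 \<le> t \<and> t \<le> 1 \<and> unimod (\<lambda>s. ps (diffs a) s / ps (diffs b) s) t"
    using Q[rule_format, OF i1 cv_diffs[OF ca] cv_diffs[OF cb] i2 i3] by simp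
  then obtain t where t: "0 \<le> t" "t \<le> 1" and ut: "unimod (\<lambda>s. ps (diffs a) s / ps (diffs b) s) t" by blast
  note hm1 = h_mono(1)[OF bpos ca cb ut t(1)]
  note hm2 = h_mono(2)[OF bpos ca cb ut t(1)]
  let ?h = "hh a b"
  have "(0::nat) \<le> 1 \<and> (1::nat) \<le> m" using m1 by auto
  hence "a 0 / b 0 \<le> a 1 / b 1" using inc by blast
  hence h0: "?h 0 \<ge> 0" using hh_zero[of b a] bpos by blast
  have hpos1: "?h s \<ge> 0" if "0 \<le> s" "s \<le> t" "s < 1" for s
  proof -
    have "?h 0 \<le> ?h s" using hm1[of 0 s] that by simp
    thus ?thesis using h0 by linarith
  qed
  have hpos2: "?h s \<ge> 0" if s: "t \<le> s" "s < 1" for s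
  proof (rule ccontr)
    assume neg: "\<not> ?h s \<ge> 0"
    have ev: "eventually (\<lambda>x. ereal (?h (exp (- x))) \<le> ereal (?h s)) (at_right 0)"
      unfolding eventually_at_right_field
    proof (intro exI[of _ "1 - s"] conjI allI impI)
      show "(0::real) < 1 - s" using s by simp
      fix x :: real assume x: "0 < x" "x < 1 - s"
      have "1 + (- x) \<le> exp (- x)" by (rule exp_ge_add_one_self)
      hence "s \<le> exp (- x)" using x by simp
      moreover have "exp (- x) < 1" using x by simp
      ultimately show "ereal (?h (exp (- x))) \<le> ereal (?h s)" using hm2[of s "exp (- x)"] s by simp
    qed
    have "c \<le> ereal (?h s)"
      by (rule tendsto_le[OF trivial_limit_at_right_real tendsto_const lim ev])
    with c0 have "0 \<le> ereal (?h s)" by (rule order_trans)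
    thus False using neg by simp
  qed
  show ?thesis
  proof (rule E_mono_from_h[OF bpos ca cb uv])
    fix z assume "u < z" "z < v"
    thus "0 \<le> ?h z" using hpos1[of z] hpos2[of z] uv by (cases "z \<le> t") auto
  qed
qed



lemma cv_of_summable: "summable (a :: nat \<Rightarrow> real) \<Longrightarrow> cv a"
  unfolding cv_def
proof (intro allI impI)
  fix s :: real assume "summable a" "\<bar>s\<bar> < 1"
  hence "summable (\<lambda>n. a n * 1 ^ n)" by simp
  thus "summable (\<lambda>n. a n * s ^ n)" by (rule powser_inside) (use \<open>\<bar>s\<bar> < 1\<close> in simp)
qed

lemma LST_ps: "LST f x = ps f (exp (- x))"
proof -
  have "\<And>k. exp (- real k * x) = exp (- x) ^ k"
    using exp_of_nat_mult[of k "- x" for k] by simp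
  thus ?thesis unfolding LST_def ps_def by simp
qed

lemma deriv_LST:
  assumes "cv f" "0 < x"
  shows "deriv (LST f) x = ps (diffs f) (exp (- x)) * (- exp (- x))"
proof -
  have e: "\<bar>exp (- x)\<bar> < 1" using assms by simp
  have d1: "((\<lambda>x. exp (- x)) has_real_derivative (- exp (- x))) (at x)"
    by (auto intro!: derivative_eq_intros)
  have "((\<lambda>x. ps f (exp (- x))) has_real_derivative ps (diffs f) (exp (- x)) * (- exp (- x))) (at x)"
    by (rule DERIV_chain2[OF ps_deriv[OF assms(1) e] d1])
  moreover have "LST f = (\<lambda>x. ps f (exp (- x)))" by (rule ext) (rule LST_ps)
  ultimately show ?thesis by (simp add: DERIV_imp_deriv)
qed

lemma H_hh:
  assumes "cv f" "cv g" "0 < x"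
  shows "H_fun (LST f) (LST g) x = hh f g (exp (- x))"
proof -
  have ne: "- exp (- x) \<noteq> 0" by simp
  show ?thesis
    unfolding H_fun_def hh_def deriv_LST[OF assms(1,3)] deriv_LST[OF assms(2,3)] LST_ps
    using mult_divide_mult_cancel_right[OF ne] by simp
qed

lemma lim_transfer:
  assumes "cv f" "cv g"
  shows "((\<lambda>x. ereal (H_fun (LST f) (LST g) x)) \<longlongrightarrow> c) (at_right 0)
     \<longleftrightarrow> ((\<lambda>x. ereal (hh f g (exp (- x)))) \<longlongrightarrow> c) (at_right 0)"
proof (rule tendsto_cong)
  show "\<forall>\<^sub>F x in at_right 0. ereal (H_fun (LST f) (LST g) x) = ereal (hh f g (exp (- x)))"
    using eventually_at_right_less[of "0::real"] by eventually_elim (simp add: H_hh[OF assms])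
qed

lemma hh_uminus:
  assumes "cv a" "cv b" "0 \<le> s" "s < 1"
  shows "hh (\<lambda>n. - a n) b s = - hh a b s"
proof -
  have "\<bar>s\<bar> < 1" using assms by simp
  thus ?thesis unfolding hh_def diffs_minus
    using ps_uminus[OF assms(1)] ps_uminus[OF cv_diffs[OF assms(1)]] by simp
qed

theorem theorem3:
  fixes p q :: "nat \<Rightarrow> real"
  assumes p_nonneg: "\<And>k. p k \<ge> 0"
    and q_pos: "\<And>k. q k > 0"
    and p_distr: "p sums 1"
    and q_distr: "q sums 1"
  shows "(((\<forall>i j. i \<le> j \<longrightarrow> p i / q i \<le> p j / q j)
          \<or> (\<exists>m::nat. m \<ge> 1
               \<and> (\<forall>i j. i \<le> j \<and> j \<le> m \<longrightarrow> p i / q i \<le> p j / q j)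
               \<and> (\<forall>i j. m \<le> i \<and> i \<le> j \<longrightarrow> p j / q j \<le> p i / q i)
               \<and> (\<exists>c::ereal. ((\<lambda>x. ereal (H_fun (LST p) (LST q) x)) \<longlongrightarrow> c) (at_right 0)
                            \<and> c \<ge> 0)))
         \<longrightarrow> lt_r_le q p)
       \<and> (((\<forall>i j. i \<le> j \<longrightarrow> p j / q j \<le> p i / q i)
          \<or> (\<exists>m::nat. m \<ge> 1
               \<and> (\<forall>i j. i \<le> j \<and> j \<le> m \<longrightarrow> p j / q j \<le> p i / q i)
               \<and> (\<forall>i j. m \<le> i \<and> i \<le> j \<longrightarrow> p i / q i \<le> p j / q j)
               \<and> (\<exists>c::ereal. ((\<lambda>x. ereal (H_fun (LST p) (LST q) x)) \<longlongrightarrow> c) (at_right 0)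
                            \<and> c \<le> 0)))
         \<longrightarrow> lt_r_le p q)"
proof (intro conjI impI)
  have cp: "cv p" using p_distr by (intro cv_of_summable) (rule sums_summable)
  have cq: "cv q" using q_distr by (intro cv_of_summable) (rule sums_summable)
  have ex: "exp (- y) \<le> exp (- x) \<and> 0 \<le> exp (- y) \<and> exp (- x) < 1" if "0 < x" "x \<le> y" for x y :: real
    using that by simp
  {
    assume cond: "(\<forall>i j. i \<le> j \<longrightarrow> p i / q i \<le> p j / q j)
          \<or> (\<exists>m::nat. m \<ge> 1
               \<and> (\<forall>i j. i \<le> j \<and> j \<le> m \<longrightarrow> p i / q i \<le> p j / q j)
               \<and> (\<forall>i j. m \<le> i \<and> i \<le> j \<longrightarrow> p j / q j \<le> p i / q i)
               \<and> (\<exists>c::ereal. ((\<lambda>x. ereal (H_fun (LST p) (LST q) x)) \<longlongrightarrow> c) (at_right 0)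
                            \<and> c \<ge> 0))"
    have cond': "(\<forall>i j. i \<le> j \<longrightarrow> p i / q i \<le> p j / q j)
          \<or> (\<exists>m::nat. m \<ge> 1
               \<and> (\<forall>i j. i \<le> j \<and> j \<le> m \<longrightarrow> p i / q i \<le> p j / q j)
               \<and> (\<forall>i j. m \<le> i \<and> i \<le> j \<longrightarrow> p j / q j \<le> p i / q i)
               \<and> (\<exists>c::ereal. ((\<lambda>x. ereal (hh p q (exp (- x)))) \<longlongrightarrow> c) (at_right 0) \<and> c \<ge> 0))"
      using cond unfolding lim_transfer[OF cp cq] .
    show "lt_r_le q p"
      unfolding lt_r_le_def
    proof (intro allI impI)
      fix x y :: real assume "0 < x" "x \<le> y"
      hence "0 \<le> exp (- y)" "exp (- y) \<le> exp (- x)" "exp (- x) < 1" using ex by auto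
      from core[OF q_pos cp cq cond' this] show "LST p y / LST q y \<le> LST p x / LST q x"
        unfolding LST_ps .
    qed
  }
  {
    assume cond: "(\<forall>i j. i \<le> j \<longrightarrow> p j / q j \<le> p i / q i)
          \<or> (\<exists>m::nat. m \<ge> 1
               \<and> (\<forall>i j. i \<le> j \<and> j \<le> m \<longrightarrow> p j / q j \<le> p i / q i)
               \<and> (\<forall>i j. m \<le> i \<and> i \<le> j \<longrightarrow> p i / q i \<le> p j / q j)
               \<and> (\<exists>c::ereal. ((\<lambda>x. ereal (H_fun (LST p) (LST q) x)) \<longlongrightarrow> c) (at_right 0)
                            \<and> c \<le> 0))"
    define a where "a = (\<lambda>n. - p n)"
    have ca: "cv a" unfolding a_def by (rule cv_uminus[OF cp])
    have ra: "a i / q i = - (p i / q i)" for i unfolding a_def by simp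
    have hha: "hh a q (exp (- x)) = - hh p q (exp (- x))" if "0 < x" for x :: real
      unfolding a_def by (rule hh_uminus[OF cp cq]) (use that in simp_all)
    have limneg: "((\<lambda>x. ereal (hh a q (exp (- x)))) \<longlongrightarrow> - c) (at_right 0)"
      if "((\<lambda>x. ereal (hh p q (exp (- x)))) \<longlongrightarrow> c) (at_right 0)" for c
    proof -
      have l1: "((\<lambda>x. - ereal (hh p q (exp (- x)))) \<longlongrightarrow> - c) (at_right 0)"
        using that by (rule tendsto_uminus_ereal)
      have ev: "\<forall>\<^sub>F x in at_right 0. - ereal (hh p q (exp (- x))) = ereal (hh a q (exp (- x)))"
        using eventually_at_right_less[of "0::real"] by eventually_elim (simp add: hha)
      from l1 show ?thesis unfolding tendsto_cong[OF ev] .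
    qed
    have cond': "(\<forall>i j. i \<le> j \<longrightarrow> a i / q i \<le> a j / q j)
          \<or> (\<exists>m::nat. m \<ge> 1
               \<and> (\<forall>i j. i \<le> j \<and> j \<le> m \<longrightarrow> a i / q i \<le> a j / q j)
               \<and> (\<forall>i j. m \<le> i \<and> i \<le> j \<longrightarrow> a j / q j \<le> a i / q i)
               \<and> (\<exists>c::ereal. ((\<lambda>x. ereal (hh a q (exp (- x)))) \<longlongrightarrow> c) (at_right 0) \<and> c \<ge> 0))"
      using cond
    proof
      assume "\<forall>i j. i \<le> j \<longrightarrow> p j / q j \<le> p i / q i"
      hence "\<forall>i j. i \<le> j \<longrightarrow> a i / q i \<le> a j / q j" unfolding ra by simp
      thus ?thesis by blast
    next
      assume "\<exists>m::nat. m \<ge> 1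
               \<and> (\<forall>i j. i \<le> j \<and> j \<le> m \<longrightarrow> p j / q j \<le> p i / q i)
               \<and> (\<forall>i j. m \<le> i \<and> i \<le> j \<longrightarrow> p i / q i \<le> p j / q j)
               \<and> (\<exists>c::ereal. ((\<lambda>x. ereal (H_fun (LST p) (LST q) x)) \<longlongrightarrow> c) (at_right 0)
                            \<and> c \<le> 0)"
      then obtain m c where m: "m \<ge> 1"
        and i1: "\<forall>i j. i \<le> j \<and> j \<le> m \<longrightarrow> p j / q j \<le> p i / q i"
        and i2: "\<forall>i j. m \<le> i \<and> i \<le> j \<longrightarrow> p i / q i \<le> p j / q j"
        and l: "((\<lambda>x. ereal (H_fun (LST p) (LST q) x)) \<longlongrightarrow> c) (at_right 0)" and c: "c \<le> 0"
        by blast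
      have "((\<lambda>x. ereal (hh a q (exp (- x)))) \<longlongrightarrow> - c) (at_right 0)"
        using l unfolding lim_transfer[OF cp cq] by (rule limneg)
      moreover have "- c \<ge> 0" using c by (simp add: ereal_uminus_le_reorder)
      moreover have "\<forall>i j. i \<le> j \<and> j \<le> m \<longrightarrow> a i / q i \<le> a j / q j" using i1 unfolding ra by simp
      moreover have "\<forall>i j. m \<le> i \<and> i \<le> j \<longrightarrow> a j / q j \<le> a i / q i" using i2 unfolding ra by simp
      ultimately have "\<exists>c::ereal. ((\<lambda>x. ereal (hh a q (exp (- x)))) \<longlongrightarrow> c) (at_right 0) \<and> c \<ge> 0"
        and "\<forall>i j. i \<le> j \<and> j \<le> m \<longrightarrow> a i / q i \<le> a j / q j"
        and "\<forall>i j. m \<le> i \<and> i \<le> j \<longrightarrow> a j / q j \<le> a i / q i" by blast+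
      with m show ?thesis by (intro disjI2 exI[of _ m] conjI)
    qed
    obtain k where pk: "p k > 0"
    proof -
      have "\<exists>k. p k \<noteq> 0"
      proof (rule ccontr)
        assume "\<not> (\<exists>k. p k \<noteq> 0)"
        hence "p = (\<lambda>_. 0)" by auto
        hence "p sums 0" by simp
        from sums_unique2[OF p_distr this] show False by simp
      qed
      then obtain k where "p k \<noteq> 0" by blast
      hence "p k > 0" using p_nonneg[of k] by simp
      thus ?thesis by (rule that)
    qed
    have ppos: "ps p s > 0" if "0 < s" "s < 1" for s
      unfolding ps_def
    proof (rule suminf_pos2[of _ k])
      show "summable (\<lambda>n. p n * s ^ n)" using cp that unfolding cv_def by simp
      show "0 \<le> p n * s ^ n" for n using p_nonneg[of n] that by simp
      show "0 < p k * s ^ k" using pk that by simp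
    qed
    show "lt_r_le p q"
      unfolding lt_r_le_def
    proof (intro allI impI)
      fix x y :: real assume xy: "0 < x" "x \<le> y"
      hence e: "0 \<le> exp (- y)" "exp (- y) \<le> exp (- x)" "exp (- x) < 1" using ex by auto
      have "ps a (exp (- y)) / ps q (exp (- y)) \<le> ps a (exp (- x)) / ps q (exp (- x))"
        by (rule core[OF q_pos ca cq cond' e])
      moreover have "ps a s = - ps p s" if "0 \<le> s" "s < 1" for s
        unfolding a_def by (rule ps_uminus[OF cp]) (use that in simp)
      ultimately have "- ps p (exp (- y)) / ps q (exp (- y)) \<le> - ps p (exp (- x)) / ps q (exp (- x))"
        using e by simp
      hence le: "ps p (exp (- x)) / ps q (exp (- x)) \<le> ps p (exp (- y)) / ps q (exp (- y))"
        by (simp only: minus_divide_left[symmetric] neg_le_iff_le)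
      have q1: "ps q (exp (- x)) > 0" "ps q (exp (- y)) > 0" using ps_pos[OF q_pos cq] e by auto
      have p1: "ps p (exp (- x)) > 0" "ps p (exp (- y)) > 0" using ppos e by auto
      have pos: "0 < ps p (exp (- x)) / ps q (exp (- x))" using p1 q1 by simp
      have pos2: "0 < ps p (exp (- y)) / ps q (exp (- y))" using pos le by linarith
      have "1 / (ps p (exp (- y)) / ps q (exp (- y))) \<le> 1 / (ps p (exp (- x)) / ps q (exp (- x)))"
        by (rule divide_left_mono[OF le _ mult_pos_pos[OF pos2 pos]]) simp
      thus "LST q y / LST p y \<le> LST q x / LST p x" unfolding LST_ps by simp
    qed
  }
qed


end
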